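(* Let $n\in\mathbb{N}$ and $f\colon\{-1,1\}^n\to[-1,1]$ with $f(1,\dots,1)=1$ and $f(-1,\dots,-1)=-1$. Let $\rho$ be the distribution of $p=\frac{e^t-1}{e^t+1}$ where $t$ is uniform on $[-\ln(5n),\ln(5n)]$. Then $$\mathbb{E}_{p\sim\rho,\ x_{1\ldots n}\sim p}\left[f(x)\cdot\sum_{i=1}^n(x_i-p)\right]\ge\frac{1}{\ln(5n)}.$$
   Context: For $p\in[-1,1]$, $x_{1\ldots n}\sim p$ means $x=(x_1,\dots,x_n)$ where the $x_i\in\{-1,1\}$ are independent with $\mathbb{E}[x_i]=p$, i.e. $\Pr[x_i=1]=\frac{1+p}{2}$. *)

theory Defs
  imports "HOL-Probability.Probability"
begin

definition cube :: "nat \<Rightarrow> int list set" where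
  "cube n = {xs. length xs = n \<and> set xs \<subseteq> {-1, 1}}"

text \<open>Probability of x under x_{1..n} ~ p: independent coordinates with
  Pr[x_i = 1] = (1+p)/2, Pr[x_i = -1] = (1-p)/2, i.e. Pr[x_i] = (1 + p x_i)/2.\<close>
definition bias_prob :: "real \<Rightarrow> int list \<Rightarrow> real" where
  "bias_prob p xs = (\<Prod>xi\<leftarrow>xs. (1 + p * real_of_int xi) / 2)"

definition inner_exp :: "nat \<Rightarrow> (int list \<Rightarrow> real) \<Rightarrow> real \<Rightarrow> real" where
  "inner_exp n f p = (\<Sum>xs\<in>cube n. bias_prob p xs * (f xs * (\<Sum>xi\<leftarrow>xs. real_of_int xi - p)))"

definition rho :: "nat \<Rightarrow> real measure" where
  "rho n = distr (uniform_measure lborel {- ln (5 * real n) .. ln (5 * real n)}) borel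
              (\<lambda>t. (exp t - 1) / (exp t + 1))"

end

theory Submission
  imports Defs
begin

fun bdr :: "int list \<Rightarrow> real \<Rightarrow> real" where
  "bdr [] p = 0"
| "bdr (x # xs) p = real_of_int x / 2 * bias_prob p xs + (1 + p * real_of_int x) / 2 * bdr xs p"

lemma bias_Nil[simp]: "bias_prob p [] = 1"
  by (simp add: bias_prob_def)

lemma bias_Cons[simp]: "bias_prob p (x # xs) = (1 + p * real_of_int x) / 2 * bias_prob p xs"
  by (simp add: bias_prob_def)

lemma bias_deriv: "((\<lambda>p. bias_prob p xs) has_real_derivative bdr xs p) (at p)"
proof (induction xs)
  case Nil
  then show ?case by simp
next
  case (Cons x xs)
  have "((\<lambda>p. (1 + p * real_of_int x) / 2 * bias_prob p xs) has_real_derivative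
     (real_of_int x / 2 * bias_prob p xs + (1 + p * real_of_int x) / 2 * bdr xs p)) (at p)"
    using Cons by (auto intro!: derivative_eq_intros)
  then show ?case by simp
qed

lemma bias_cont: "isCont (\<lambda>p. bias_prob p xs) p"
  using bias_deriv DERIV_isCont by blast

lemma bdr_eq:
  assumes "set xs \<subseteq> {-1, 1}"
  shows "(1 - p^2) * bdr xs p = bias_prob p xs * (\<Sum>xi\<leftarrow>xs. real_of_int xi - p)"
  using assms
proof (induction xs)
  case Nil
  then show ?case by simp
next
  case (Cons x xs)
  have IH: "(1 - p^2) * bdr xs p = bias_prob p xs * (\<Sum>xi\<leftarrow>xs. real_of_int xi - p)"
    using Cons by simp
  have x: "x = -1 \<or> x = 1" using Cons.prems by auto
  have k: "(1 - p^2) * (real_of_int x / 2) = (1 + p * real_of_int x) / 2 * (real_of_int x - p)"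
    using x by (auto simp: power2_eq_square field_simps)
  have "(1 - p^2) * bdr (x # xs) p = (1 - p^2) * (real_of_int x / 2) * bias_prob p xs
      + (1 + p * real_of_int x) / 2 * ((1 - p^2) * bdr xs p)"
    by (simp add: field_simps)
  also have "\<dots> = (1 + p * real_of_int x) / 2 * bias_prob p xs * (real_of_int x - p + (\<Sum>xi\<leftarrow>xs. real_of_int xi - p))"
    by (simp only: k IH) (simp add: field_simps)
  finally show ?case by (simp add: algebra_simps)
qed

lemma bias_nonneg: "\<bar>p\<bar> \<le> 1 \<Longrightarrow> set xs \<subseteq> {-1, 1} \<Longrightarrow> bias_prob p xs \<ge> 0"
proof (induction xs)
  case Nil
  then show ?case by simp
next
  case (Cons x xs)
  have "x = -1 \<or> x = 1" using Cons.prems by auto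
  then have "(1 + p * real_of_int x) / 2 \<ge> 0" using Cons.prems(1) by auto
  then show ?case using Cons by simp
qed

lemma finite_cube: "finite (cube n)"
proof -
  have "cube n = {xs. set xs \<subseteq> {-1,1} \<and> length xs = n}" by (auto simp: cube_def)
  then show ?thesis using finite_lists_length_eq[of "{-1,1::int}" n] by simp
qed

lemma cube_Suc: "cube (Suc n) = (\<lambda>(x, xs). x # xs) ` ({-1, 1} \<times> cube n)"
proof
  show "cube (Suc n) \<subseteq> (\<lambda>(x, xs). x # xs) ` ({-1, 1} \<times> cube n)"
  proof
    fix ys assume "ys \<in> cube (Suc n)"
    then obtain x xs where "ys = x # xs" "length xs = n" "x \<in> {-1,1}" "set xs \<subseteq> {-1,1}"
      unfolding cube_def by (cases ys) auto
    then show "ys \<in> (\<lambda>(x, xs). x # xs) ` ({-1, 1} \<times> cube n)"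
      unfolding cube_def by force
  qed
qed (auto simp: cube_def)

lemma bias_sum: "(\<Sum>xs\<in>cube n. bias_prob p xs) = 1"
proof (induction n)
  case 0
  have "cube 0 = {[]}" by (auto simp: cube_def)
  then show ?case by simp
next
  case (Suc n)
  have inj: "inj_on (\<lambda>(x, xs). x # xs) ({-1, 1::int} \<times> cube n)"
    by (auto simp: inj_on_def)
  have "(\<Sum>xs\<in>cube (Suc n). bias_prob p xs) = (\<Sum>(x,xs)\<in>{-1, 1::int} \<times> cube n. bias_prob p (x # xs))"
    unfolding cube_Suc by (subst sum.reindex[OF inj]) (simp add: case_prod_unfold)
  also have "\<dots> = (\<Sum>x\<in>{-1, 1::int}. \<Sum>xs\<in>cube n. bias_prob p (x # xs))"
    by (rule sum.cartesian_product[symmetric])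
  also have "\<dots> = (\<Sum>x\<in>{-1, 1::int}. (1 + p * real_of_int x) / 2 * (\<Sum>xs\<in>cube n. bias_prob p xs))"
    by (simp add: sum_distrib_left)
  also have "\<dots> = 1" using Suc by (simp add: field_simps)
  finally show ?case .
qed


definition Pm :: "real \<Rightarrow> real" where "Pm t = (exp t - 1) / (exp t + 1)"

lemma Pm_deriv: "(Pm has_real_derivative (1 - (Pm t)^2) / 2) (at t)"
proof -
  have e: "exp t + 1 > 0" by (simp add: add_pos_pos)
  have D: "(Pm has_real_derivative (exp t * (exp t + 1) - (exp t - 1) * exp t) / (exp t + 1)^2) (at t)"
    unfolding Pm_def using e
    by (auto intro!: derivative_eq_intros simp: power2_eq_square)
  have E: "(exp t * (exp t + 1) - (exp t - 1) * exp t) / (exp t + 1)^2 = (1 - (Pm t)^2) / 2"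
  proof -
    have d: "(exp t + 1)^2 \<noteq> 0" using e by simp
    have "(1 - (Pm t)^2) / 2 = ((exp t + 1)^2 - (exp t - 1)^2) / (2 * (exp t + 1)^2)"
      unfolding Pm_def using d by (simp add: field_simps power_divide)
    also have "\<dots> = (4 * exp t) / (2 * (exp t + 1)^2)"
      by (simp add: power2_eq_square algebra_simps)
    also have "\<dots> = (exp t * (exp t + 1) - (exp t - 1) * exp t) / (exp t + 1)^2"
      by (simp add: algebra_simps)
    finally show ?thesis by (rule sym)
  qed
  show ?thesis using D unfolding E .
qed

lemma Pm_cont: "isCont Pm t"
  using Pm_deriv DERIV_isCont by blast

lemma sum_list_minus: "(\<Sum>xi\<leftarrow>xs. real_of_int xi - p) = (\<Sum>xi\<leftarrow>xs. real_of_int xi) - real (length xs) * p"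
  by (induction xs) (auto simp: algebra_simps)

lemma inner_cont: "isCont (inner_exp n f) p"
  unfolding inner_exp_def sum_list_minus
  by (intro continuous_intros bias_cont)

definition Gf :: "nat \<Rightarrow> (int list \<Rightarrow> real) \<Rightarrow> real \<Rightarrow> real" where
  "Gf n f t = (\<Sum>xs\<in>cube n. bias_prob (Pm t) xs * f xs)"

lemma Gf_deriv: "(Gf n f has_real_derivative inner_exp n f (Pm t) / 2) (at t)"
proof -
  have "((\<lambda>t. \<Sum>xs\<in>cube n. bias_prob (Pm t) xs * f xs) has_real_derivative
       (\<Sum>xs\<in>cube n. bdr xs (Pm t) * ((1 - (Pm t)^2) / 2) * f xs)) (at t)"
    by (intro DERIV_sum DERIV_cmult_right DERIV_chain2[OF bias_deriv Pm_deriv])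
  moreover have "(\<Sum>xs\<in>cube n. bdr xs (Pm t) * ((1 - (Pm t)^2) / 2) * f xs) = inner_exp n f (Pm t) / 2"
    unfolding inner_exp_def sum_divide_distrib
  proof (rule sum.cong)
    fix xs assume "xs \<in> cube n"
    then have "set xs \<subseteq> {-1,1}" by (simp add: cube_def)
    from bdr_eq[OF this, of "Pm t"]
    have e: "bias_prob (Pm t) xs * (\<Sum>xi\<leftarrow>xs. real_of_int xi - Pm t) = (1 - (Pm t)^2) * bdr xs (Pm t)" by simp
    have "bdr xs (Pm t) * ((1 - (Pm t)^2) / 2) * f xs = f xs * ((1 - (Pm t)^2) * bdr xs (Pm t)) / 2"
      by (simp add: algebra_simps)
    also have "\<dots> = f xs * (bias_prob (Pm t) xs * (\<Sum>xi\<leftarrow>xs. real_of_int xi - Pm t)) / 2"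
      by (simp only: e)
    also have "\<dots> = bias_prob (Pm t) xs * (f xs * (\<Sum>xi\<leftarrow>xs. real_of_int xi - Pm t)) / 2"
      by (simp add: algebra_simps)
    finally show "bdr xs (Pm t) * ((1 - (Pm t)^2) / 2) * f xs =
      bias_prob (Pm t) xs * (f xs * (\<Sum>xi\<leftarrow>xs. real_of_int xi - Pm t)) / 2" .
  qed simp
  ultimately show ?thesis unfolding Gf_def[abs_def] by metis
qed

lemma bias_rep: "bias_prob p (replicate n c) = ((1 + p * real_of_int c) / 2) ^ n"
  by (induction n) auto

lemma G_lower:
  assumes "\<bar>q\<bar> \<le> 1" "\<forall>xs\<in>cube n. -1 \<le> f xs \<and> f xs \<le> 1" "f w = 1" "w \<in> cube n"
  shows "(\<Sum>xs\<in>cube n. bias_prob q xs * f xs) \<ge> 2 * bias_prob q w - 1"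
proof -
  have nn: "\<And>xs. xs \<in> cube n \<Longrightarrow> bias_prob q xs \<ge> 0"
    using bias_nonneg[OF assms(1)] by (auto simp: cube_def)
  have "(\<Sum>xs\<in>cube n - {w}. bias_prob q xs * f xs) \<ge> (\<Sum>xs\<in>cube n - {w}. - bias_prob q xs)"
  proof (rule sum_mono)
    fix xs assume "xs \<in> cube n - {w}"
    then have "bias_prob q xs \<ge> 0" "f xs \<ge> -1" using nn assms(2) by auto
    then show "- bias_prob q xs \<le> bias_prob q xs * f xs"
      by (metis mult.right_neutral mult_left_mono mult_minus_right)
  qed
  moreover have "(\<Sum>xs\<in>cube n - {w}. bias_prob q xs) = 1 - bias_prob q w"
    using sum.remove[OF finite_cube assms(4), of "bias_prob q"] bias_sum[of q n] by simp
  moreover have "(\<Sum>xs\<in>cube n. bias_prob q xs * f xs) = bias_prob q w + (\<Sum>xs\<in>cube n - {w}. bias_prob q xs * f xs)"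
    using sum.remove[OF finite_cube assms(4), of "\<lambda>xs. bias_prob q xs * f xs"] assms(3) by simp
  ultimately show ?thesis by (simp add: sum_negf)
qed

lemma G_upper:
  assumes "\<bar>q\<bar> \<le> 1" "\<forall>xs\<in>cube n. -1 \<le> f xs \<and> f xs \<le> 1" "f w = -1" "w \<in> cube n"
  shows "(\<Sum>xs\<in>cube n. bias_prob q xs * f xs) \<le> 1 - 2 * bias_prob q w"
proof -
  have "(\<Sum>xs\<in>cube n. bias_prob q xs * (- f xs)) \<ge> 2 * bias_prob q w - 1"
    using assms by (intro G_lower) auto
  then show ?thesis by (simp add: sum_negf)
qed


lemma Pm_neg: "Pm (-t) = - Pm t"
proof -
  have e: "exp t > 0" by simp
  have "Pm (-t) = (1 / exp t - 1) / (1 / exp t + 1)" unfolding Pm_def by (simp add: exp_minus field_simps)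
  also have "\<dots> = (1 - exp t) / (1 + exp t)"
  proof -
    have a: "1 / exp t - 1 = (1 - exp t) / exp t" "1 / exp t + 1 = (1 + exp t) / exp t"
      using e by (simp_all add: field_simps)
    show ?thesis unfolding a using e by simp
  qed
  also have "\<dots> = - Pm t"
  proof -
    have "exp t + 1 > 0" by (simp add: add_pos_pos)
    then show ?thesis unfolding Pm_def by (simp add: field_simps)
  qed
  finally show ?thesis .
qed

lemma Pm_abs: "\<bar>Pm t\<bar> \<le> 1"
proof -
  have e: "exp t > 0" by simp
  then have "\<bar>exp t - 1\<bar> \<le> exp t + 1" by linarith
  moreover have "\<bar>Pm t\<bar> = \<bar>exp t - 1\<bar> / (exp t + 1)"
    unfolding Pm_def abs_divide using e by simp
  ultimately show ?thesis using e by (simp add: divide_le_eq)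
qed

lemma integral_part:
  fixes n :: nat and f :: "int list \<Rightarrow> real"
  assumes L: "L > 0" "L = ln (5 * real n)"
  shows "(\<integral>p. inner_exp n f p \<partial>rho n) = (Gf n f L - Gf n f (-L)) / L"
proof -
  define S where "S = {-L..L}"
  define g where "g = (\<lambda>t. inner_exp n f (Pm t))"
  have gc: "\<And>t. isCont g t" unfolding g_def by (rule isCont_o2[OF Pm_cont inner_cont])
  then have gcon: "continuous_on UNIV g" by (simp add: continuous_at_imp_continuous_on)
  have gm: "g \<in> borel_measurable borel" by (rule borel_measurable_continuous_onI[OF gcon])
  have im: "inner_exp n f \<in> borel_measurable borel"
    by (rule borel_measurable_continuous_onI) (simp add: continuous_at_imp_continuous_on inner_cont)
  have FTC: "((\<lambda>t. inner_exp n f (Pm t) / 2) has_integral (Gf n f L - Gf n f (-L))) {-L..L}"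
    apply (rule fundamental_theorem_of_calculus)
    using L apply simp
    using has_field_derivative_at_within[OF Gf_deriv]
    unfolding has_real_derivative_iff_has_vector_derivative by blast
  have "((\<lambda>t. 2 * (inner_exp n f (Pm t) / 2)) has_integral (2 * (Gf n f L - Gf n f (-L)))) {-L..L}"
    by (rule has_integral_mult_right[OF FTC])
  then have HK: "integral S g = 2 * (Gf n f L - Gf n f (-L))"
    unfolding S_def g_def by (simp add: integral_unique)
  have si: "set_integrable lborel S g"
    unfolding S_def by (rule borel_integrable_atLeastAtMost') (use gcon continuous_on_subset in blast)
  have LI: "(LINT t:S|lborel. g t) = 2 * (Gf n f L - Gf n f (-L))"
    using set_borel_integral_eq_integral(2)[OF si] HK by simp
  have rho: "rho n = distr (uniform_measure lborel S) borel Pm"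
    unfolding rho_def S_def Pm_def[abs_def] using L by simp
  have Pmm: "Pm \<in> measurable (uniform_measure lborel S) borel"
  proof -
    have "Pm \<in> borel_measurable borel" by (rule borel_measurable_continuous_onI) (simp add: continuous_at_imp_continuous_on Pm_cont)
    moreover have "measurable (uniform_measure lborel S) borel = measurable borel borel"
      by (rule measurable_cong_sets) simp_all
    ultimately show ?thesis by simp
  qed
  have um: "uniform_measure lborel S = density lborel (\<lambda>t. ennreal (indicator S t / (2 * L)))"
  proof -
    have em: "emeasure lborel S = ennreal (2 * L)" unfolding S_def using L by simp
    show ?thesis unfolding uniform_measure_def em
    proof (intro arg_cong[where f="density lborel"] ext)
      fix t
      show "indicator S t / ennreal (2 * L) = ennreal (indicator S t / (2 * L))"
      proof (cases "t \<in> S")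
        case True
        then show ?thesis using divide_ennreal[of 1 "2 * L"] L by simp
      next
        case False
        then show ?thesis by simp
      qed
    qed
  qed
  have Ssets: "S \<in> sets borel" unfolding S_def by simp
  have dm: "(\<lambda>t. indicator S t / (2 * L)) \<in> borel_measurable lborel"
    using Ssets by (simp add: borel_measurable_indicator)
  have "(\<integral>p. inner_exp n f p \<partial>rho n) = (\<integral>t. g t \<partial>uniform_measure lborel S)"
    unfolding rho g_def by (rule integral_distr[OF Pmm im])
  also have "\<dots> = (\<integral>t. (indicator S t / (2 * L)) *\<^sub>R g t \<partial>lborel)"
    unfolding um using L gm dm by (intro integral_density) auto
  also have "\<dots> = (\<integral>t. (1 / (2 * L)) * (indicator S t *\<^sub>R g t) \<partial>lborel)"
    by (simp add: indicator_def)
  also have "\<dots> = (1 / (2 * L)) * (LINT t:S|lborel. g t)"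
    by (simp add: set_lebesgue_integral_def)
  also have "\<dots> = (Gf n f L - Gf n f (-L)) / L"
    unfolding LI using L(1) by (simp add: field_simps)
  finally show ?thesis .
qed


theorem lemma4p2:
  fixes n :: nat and f :: "int list \<Rightarrow> real"
  assumes "n \<ge> 1"
    and "\<forall>xs\<in>cube n. -1 \<le> f xs \<and> f xs \<le> 1"
    and "f (replicate n 1) = 1"
    and "f (replicate n (-1)) = -1"
  shows "(\<integral>p. inner_exp n f p \<partial>rho n) \<ge> 1 / ln (5 * real n)"
proof -
  define L where "L = ln (5 * real n)"
  have n5: "5 * real n \<ge> 5" using assms(1) by simp
  have Lpos: "L > 0" unfolding L_def using n5 by simp
  have eL: "exp L = 5 * real n" unfolding L_def using n5 by simp
  define q where "q = Pm L"
  have q: "q = (5 * real n - 1) / (5 * real n + 1)" unfolding q_def Pm_def eL ..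
  have qa: "\<bar>q\<bar> \<le> 1" unfolding q_def by (rule Pm_abs)
  define a where "a = ((1 + q) / 2) ^ n"
  have h: "(1 + q) / 2 = 1 + (- 1 / (5 * real n + 1))"
    unfolding q using n5 by (simp add: field_simps)
  have "1 + real n * (- 1 / (5 * real n + 1)) \<le> a"
    unfolding a_def h by (rule Bernoulli_inequality) (use n5 in simp)
  moreover have "real n * (- 1 / (5 * real n + 1)) \<ge> - 1 / 5"
    using n5 by (simp add: field_simps)
  ultimately have a45: "a \<ge> 4 / 5" by linarith
  have c1: "replicate n 1 \<in> cube n" "replicate n (-1) \<in> cube n" by (auto simp: cube_def)
  have b1: "bias_prob q (replicate n 1) = a" unfolding bias_rep a_def by simp
  have b2: "bias_prob (-q) (replicate n (-1)) = a" unfolding bias_rep a_def by simp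
  have G1: "Gf n f L \<ge> 2 * a - 1"
    using G_lower[OF qa assms(2) assms(3) c1(1)] b1 unfolding Gf_def q_def by simp
  have qa': "\<bar>-q\<bar> \<le> 1" using qa by simp
  have G2: "Gf n f (-L) \<le> 1 - 2 * a"
    using G_upper[OF qa' assms(2) assms(4) c1(2)] b2 unfolding Gf_def q_def Pm_neg by simp
  have "Gf n f L - Gf n f (-L) \<ge> 1" using G1 G2 a45 by linarith
  then have "(Gf n f L - Gf n f (-L)) / L \<ge> 1 / L" using Lpos by (simp add: divide_right_mono)
  then show ?thesis using integral_part[OF Lpos L_def] unfolding L_def by simp
qed

end
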